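(* Let $d\ge 2$, $n\ge d+2$, and let $\mathcal{F}$, $B_i$, $\mathcal{X}_v$ be as in the context. For every $v\in[n]$, the family $\mathcal{X}_v\subseteq\binom{[n]\setminus\{v\}}{d}$ has VC-dimension at most $d-1$; consequently $|\mathcal{X}_v|\le\binom{n-1}{d-1}$.
   Context: Let $\mathcal{F}=\{F_1,\dots,F_m\}\subseteq\binom{[n]}{d+1}$ consist of distinct sets and have VC-dimension at most $d$ (no $(d+1)$-set $S$ is shattered, i.e. no $S$ such that every $A\subseteq S$ equals $F\cap S$ for some $F\in\mathcal{F}$). For $i\in[m]$, call $B\subsetneq F_i$ admissible for $F_i$ if $F\cap F_i\neq B$ for every $F\in\mathcal{F}$ (admissible sets exist by the VC-dimension assumption). For each $i$, $B_i$ is a fixed admissible set for $F_i$ of maximum cardinality among all admissible sets for $F_i$. For $v\in[n]$, $\mathcal{X}_v:=\{F_k\setminus\{v\}: k\in[m],\ v\in B_k\}$. *)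

theory Defs
  imports Main
begin

definition shatters :: "'a set set \<Rightarrow> 'a set \<Rightarrow> bool" where
  "shatters Fs S \<longleftrightarrow> (\<forall>A \<subseteq> S. \<exists>F\<in>Fs. F \<inter> S = A)"

definition vc_dim_le :: "'a set set \<Rightarrow> nat \<Rightarrow> bool" where
  "vc_dim_le Fs d \<longleftrightarrow> (\<forall>S. finite S \<and> card S = d + 1 \<longrightarrow> \<not> shatters Fs S)"

definition admissible :: "'a set set \<Rightarrow> 'a set \<Rightarrow> 'a set \<Rightarrow> bool" where
  "admissible Fs Fi B \<longleftrightarrow> B \<subset> Fi \<and> (\<forall>F\<in>Fs. F \<inter> Fi \<noteq> B)"

end

theory Submission
  imports Defs "HOL-Library.Function_Algebras" Complex_Main
begin

lemma fsum_apply: "(sum f A) x = sum (\<lambda>a. f a x) A"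
  by (induction A rule: infinite_finite_induct) auto

interpretation FV: vector_space "\<lambda>(r::real) (f::nat set \<Rightarrow> real) x. r * f x"
  by unfold_locales (auto simp: fun_eq_iff algebra_simps)

lemma incl_excl:
  fixes X :: "nat set set" and c :: "nat set \<Rightarrow> real" and T :: "nat set"
  assumes zero: "\<And>R. R \<subseteq> T \<Longrightarrow> R \<noteq> T \<Longrightarrow> (\<Sum>F\<in>X. if R \<subseteq> F then c F else 0) = 0"
    and fT: "finite T"
  shows "A \<subseteq> R \<Longrightarrow> R \<subseteq> T \<Longrightarrow>
     \<bar>\<Sum>F\<in>X. if F \<inter> R = A then c F else 0\<bar> = \<bar>\<Sum>F\<in>X. if R \<subseteq> F then c F else 0\<bar>"
proof (induction "card (R - A)" arbitrary: R A rule: less_induct)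
  case less
  show ?case
  proof (cases "A = R")
    case True
    have "\<And>F. (F \<inter> R = R) = (R \<subseteq> F)" by blast
    then show ?thesis using True by simp
  next
    case False
    then obtain x where x: "x \<in> R" "x \<notin> A" using less.prems by blast
    have fR: "finite R" using less.prems fT finite_subset by blast
    have split: "\<And>F. (if F \<inter> (R - {x}) = A then c F else 0)
        = (if F \<inter> R = A then c F else 0) + (if F \<inter> R = insert x A then c F else 0)"
      using x less.prems(1) by auto
    have c1: "card ((R - {x}) - A) < card (R - A)"
      using x fR by (intro psubset_card_mono) auto
    have c2: "card (R - insert x A) < card (R - A)"
      using x fR by (intro psubset_card_mono) auto
    have h1: "\<bar>\<Sum>F\<in>X. if F \<inter> (R - {x}) = A then c F else 0\<bar> = 0"
    proof -
      have a: "A \<subseteq> R - {x}" "R - {x} \<subseteq> T" using less.prems x by auto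
      have b: "R - {x} \<noteq> T" using less.prems x by auto
      show ?thesis using less.hyps[OF c1 a] zero[OF a(2) b] by simp
    qed
    have h2: "\<bar>\<Sum>F\<in>X. if F \<inter> R = insert x A then c F else 0\<bar>
        = \<bar>\<Sum>F\<in>X. if R \<subseteq> F then c F else 0\<bar>"
      using less.hyps[OF c2] less.prems x by auto
    have "(\<Sum>F\<in>X. if F \<inter> (R - {x}) = A then c F else 0)
        = (\<Sum>F\<in>X. if F \<inter> R = A then c F else 0) + (\<Sum>F\<in>X. if F \<inter> R = insert x A then c F else 0)"
      unfolding split by (rule sum.distrib)
    then show ?thesis using h1 h2 by linarith
  qed
qed

lemma extend_zero:
  fixes X :: "nat set set" and c :: "nat set \<Rightarrow> real"
  assumes fO: "finite \<Omega>" and XU: "\<And>F. F \<in> X \<Longrightarrow> F \<subseteq> \<Omega> \<and> card F = k" and fX: "finite X"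
    and k: "k \<ge> 1"
    and base: "\<And>G. G \<subseteq> \<Omega> \<Longrightarrow> card G = k - 1 \<Longrightarrow> (\<Sum>F\<in>X. if G \<subseteq> F then c F else 0) = 0"
  shows "H \<subseteq> \<Omega> \<Longrightarrow> card H \<le> k - 1 \<Longrightarrow> (\<Sum>F\<in>X. if H \<subseteq> F then c F else 0) = 0"
proof -
  have main: "\<forall>H. H \<subseteq> \<Omega> \<longrightarrow> card H = k - 1 - j \<longrightarrow> (\<Sum>F\<in>X. if H \<subseteq> F then c F else 0) = 0" for j
  proof (induction j)
    case 0
    then show ?case using base by auto
  next
    case (Suc j)
    show ?case
    proof (intro allI impI)
      fix H assume H: "H \<subseteq> \<Omega>" "card H = k - 1 - Suc j"
      show "(\<Sum>F\<in>X. if H \<subseteq> F then c F else 0) = 0"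
      proof (cases "k - 1 - j = 0")
        case True
        then show ?thesis using Suc.IH H by auto
      next
        case False
        have fH: "finite H" using H fO finite_subset by blast
        have cardins: "card (insert y H) = k - 1 - j" if "y \<in> \<Omega> - H" for y
          using that H False fH by auto
        have zs: "(\<Sum>y\<in>\<Omega> - H. \<Sum>F\<in>X. if insert y H \<subseteq> F then c F else 0) = 0"
        proof (rule sum.neutral, rule ballI)
          fix y assume y: "y \<in> \<Omega> - H"
          have "insert y H \<subseteq> \<Omega>" using y H by auto
          then show "(\<Sum>F\<in>X. if insert y H \<subseteq> F then c F else 0) = 0"
            using Suc.IH cardins[OF y] by blast
        qed
        have inner: "(\<Sum>y\<in>\<Omega> - H. if insert y H \<subseteq> F then c F else 0)
           = (if H \<subseteq> F then real (k - card H) * c F else 0)" if F: "F \<in> X" for F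
        proof (cases "H \<subseteq> F")
          case True
          have "(\<Sum>y\<in>\<Omega> - H. if insert y H \<subseteq> F then c F else 0)
              = (\<Sum>y\<in>\<Omega> - H. if y \<in> F then c F else 0)"
            using True by (intro sum.cong) auto
          also have "\<dots> = (\<Sum>y\<in>(\<Omega> - H) \<inter> F. c F)"
            using fO by (simp add: sum.inter_restrict[symmetric])
          also have "(\<Omega> - H) \<inter> F = F - H" using XU[OF F] by auto
          also have "(\<Sum>y\<in>F - H. c F) = real (card (F - H)) * c F" by simp
          also have "card (F - H) = k - card H"
            using XU[OF F] True fH by (simp add: card_Diff_subset)
          finally show ?thesis using True by simp
        next
          case False
          then show ?thesis by simp
        qed
        have "(\<Sum>y\<in>\<Omega> - H. \<Sum>F\<in>X. if insert y H \<subseteq> F then c F else 0)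
            = (\<Sum>F\<in>X. \<Sum>y\<in>\<Omega> - H. if insert y H \<subseteq> F then c F else 0)"
          by (rule sum.swap)
        also have "\<dots> = (\<Sum>F\<in>X. if H \<subseteq> F then real (k - card H) * c F else 0)"
          using inner by (intro sum.cong) auto
        also have "\<dots> = real (k - card H) * (\<Sum>F\<in>X. if H \<subseteq> F then c F else 0)"
          by (simp add: sum_distrib_left if_distrib cong: if_cong)
        finally have "real (k - card H) * (\<Sum>F\<in>X. if H \<subseteq> F then c F else 0) = 0"
          using zs by simp
        moreover have "k - card H > 0" using H False by auto
        ultimately show ?thesis by simp
      qed
    qed
  qed
  assume "H \<subseteq> \<Omega>" "card H \<le> k - 1"
  then show ?thesis using main[of "k - 1 - card H"] by auto
qed

lemma lin_dep:
  fixes X :: "nat set set"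
  assumes fO: "finite \<Omega>" and XU: "\<And>F. F \<in> X \<Longrightarrow> F \<subseteq> \<Omega> \<and> card F = k"
    and k: "k \<ge> 2" and big: "card X > card \<Omega> choose (k - 1)"
  shows "\<exists>c::nat set \<Rightarrow> real. (\<exists>T\<in>X. c T \<noteq> 0) \<and>
     (\<forall>G. G \<subseteq> \<Omega> \<longrightarrow> card G = k - 1 \<longrightarrow> (\<Sum>F\<in>X. if G \<subseteq> F then c F else 0) = 0)"
proof -
  define Gs where "Gs = {G. G \<subseteq> \<Omega> \<and> card G = k - 1}"
  define \<delta> :: "nat set \<Rightarrow> nat set \<Rightarrow> real" where "\<delta> G = (\<lambda>H. if H = G then 1 else 0)" for G
  define w :: "nat set \<Rightarrow> nat set \<Rightarrow> real" where
    "w F = (\<lambda>H. if H \<subseteq> F \<and> card H = k - 1 then 1 else 0)" for F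
  have fX: "finite X"
  proof (rule finite_subset)
    show "X \<subseteq> Pow \<Omega>" using XU by auto
  qed (use fO in auto)
  have fGs: "finite Gs"
  proof (rule finite_subset)
    show "Gs \<subseteq> Pow \<Omega>" unfolding Gs_def by auto
  qed (use fO in auto)
  have cGs: "card Gs = card \<Omega> choose (k - 1)" unfolding Gs_def by (rule n_subsets[OF fO])
  have wspan: "w F \<in> FV.span (\<delta> ` Gs)" if F: "F \<in> X" for F
  proof -
    have "w F = (\<Sum>G\<in>{G\<in>Gs. G \<subseteq> F}. \<delta> G)"
    proof (rule ext)
      fix H
      have "(\<Sum>G\<in>{G\<in>Gs. G \<subseteq> F}. \<delta> G) H = (\<Sum>G\<in>{G\<in>Gs. G \<subseteq> F}. \<delta> G H)"
        by (rule fsum_apply)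
      also have "\<dots> = (if H \<in> {G\<in>Gs. G \<subseteq> F} then 1 else 0)"
        unfolding \<delta>_def using fGs by (simp add: sum.delta)
      also have "\<dots> = w F H" unfolding w_def Gs_def using XU[OF F] by auto
      finally show "w F H = (\<Sum>G\<in>{G\<in>Gs. G \<subseteq> F}. \<delta> G) H" by simp
    qed
    also have "\<dots> \<in> FV.span (\<delta> ` Gs)"
      by (intro FV.span_sum FV.span_base) auto
    finally show ?thesis .
  qed
  have injw: "inj_on w X"
  proof (rule inj_onI)
    fix F F' assume F: "F \<in> X" and F': "F' \<in> X" and eq: "w F = w F'"
    have sub: "F \<subseteq> F'" if F: "F \<in> X" and eq: "w F = w F'" for F F'
    proof
      fix x assume x: "x \<in> F"
      have cF: "card F = k" "finite F" using XU[OF F] fO finite_subset by auto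
      have "card (F - {x}) \<ge> 1" using cF x k by auto
      then have "F - {x} \<noteq> {}" by (metis card.empty not_one_le_zero)
      then obtain y where y: "y \<in> F" "y \<noteq> x" by blast
      let ?G = "F - {y}"
      have "card ?G = k - 1" using cF y by auto
      then have "w F ?G = 1" unfolding w_def by auto
      then have "w F' ?G = 1" using eq by simp
      then have "?G \<subseteq> F'" unfolding w_def by (auto split: if_splits)
      then show "x \<in> F'" using x y by auto
    qed
    show "F = F'" using sub[OF F eq] sub[OF F' eq[symmetric]] by auto
  qed
  have notind: "\<not> FV.independent (w ` X)"
  proof
    assume ind: "FV.independent (w ` X)"
    have "w ` X \<subseteq> FV.span (\<delta> ` Gs)" using wspan by auto
    then have "card (w ` X) \<le> card (\<delta> ` Gs)"
      using FV.independent_span_bound[OF finite_imageI[OF fGs] ind] by auto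
    also have "\<dots> \<le> card Gs" by (rule card_image_le[OF fGs])
    finally show False using card_image[OF injw] cGs big by simp
  qed
  then obtain S u where S: "S \<subseteq> w ` X" "finite S"
    and sum0: "(\<Sum>v\<in>S. (\<lambda>x. u v * v x)) = 0" and nz: "\<exists>v\<in>S. u v \<noteq> 0"
    unfolding FV.independent_explicit_finite_subsets by blast
  define c where "c F = (if w F \<in> S then u (w F) else 0)" for F
  have ex: "\<exists>T\<in>X. c T \<noteq> 0"
  proof -
    obtain v where v: "v \<in> S" "u v \<noteq> 0" using nz by blast
    then obtain T where T: "T \<in> X" "v = w T" using S by auto
    then show ?thesis using v unfolding c_def by auto
  qed
  have eqs: "(\<Sum>F\<in>X. if G \<subseteq> F then c F else 0) = 0" if G: "G \<subseteq> \<Omega>" "card G = k - 1" for G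
  proof -
    let ?Y = "{F\<in>X. w F \<in> S}"
    have "(\<Sum>F\<in>X. if G \<subseteq> F then c F else 0) = (\<Sum>F\<in>X. c F * w F G)"
      using G unfolding w_def by (intro sum.cong) auto
    also have "\<dots> = (\<Sum>F\<in>?Y. u (w F) * w F G)"
    proof -
      have "(\<Sum>F\<in>X. c F * w F G) = (\<Sum>F\<in>X. if w F \<in> S then u (w F) * w F G else 0)"
        unfolding c_def by (intro sum.cong) auto
      also have "\<dots> = (\<Sum>F\<in>?Y. u (w F) * w F G)"
        using fX by (simp add: sum.inter_filter)
      finally show ?thesis .
    qed
    also have "\<dots> = (\<Sum>v\<in>w ` ?Y. u v * v G)"
      by (rule sum.reindex[symmetric, unfolded comp_def]) (rule inj_on_subset[OF injw], auto)
    also have "w ` ?Y = S" using S(1) by auto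
    also have "(\<Sum>v\<in>S. u v * v G) = (\<Sum>v\<in>S. (\<lambda>x. u v * v x)) G" by (rule fsum_apply[symmetric])
    also have "\<dots> = 0" using sum0 by simp
    finally show ?thesis .
  qed
  show ?thesis using ex eqs by blast
qed

lemma frankl_pach:
  fixes X :: "nat set set"
  assumes fO: "finite \<Omega>" and XU: "\<And>F. F \<in> X \<Longrightarrow> F \<subseteq> \<Omega> \<and> card F = k"
    and k: "k \<ge> 2" and ns: "\<And>T. finite T \<Longrightarrow> card T = k \<Longrightarrow> \<not> shatters X T"
  shows "card X \<le> card \<Omega> choose (k - 1)"
proof (rule ccontr)
  assume "\<not> ?thesis"
  then have big: "card X > card \<Omega> choose (k - 1)" by simp
  have fX: "finite X"
  proof (rule finite_subset)
    show "X \<subseteq> Pow \<Omega>" using XU by auto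
  qed (use fO in auto)
  obtain c :: "nat set \<Rightarrow> real" where ex: "\<exists>T\<in>X. c T \<noteq> 0"
    and base: "\<And>G. G \<subseteq> \<Omega> \<Longrightarrow> card G = k - 1 \<Longrightarrow> (\<Sum>F\<in>X. if G \<subseteq> F then c F else 0) = 0"
    using lin_dep[OF fO XU k big] by blast
  have ext: "(\<Sum>F\<in>X. if H \<subseteq> F then c F else 0) = 0" if "H \<subseteq> \<Omega>" "card H \<le> k - 1" for H
    using extend_zero[OF fO XU fX _ base] that k by auto
  obtain T where T: "T \<in> X" "c T \<noteq> 0" using ex by blast
  have TO: "T \<subseteq> \<Omega>" "card T = k" using XU[OF T(1)] by auto
  have fT: "finite T" using TO fO finite_subset by blast
  have zero: "(\<Sum>F\<in>X. if R \<subseteq> F then c F else 0) = 0" if "R \<subseteq> T" "R \<noteq> T" for R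
  proof -
    have "card R < card T" using that fT by (intro psubset_card_mono) auto
    then show ?thesis using ext[of R] that TO by auto
  qed
  have zT: "(\<Sum>F\<in>X. if T \<subseteq> F then c F else 0) = c T"
  proof -
    have "(\<Sum>F\<in>X. if T \<subseteq> F then c F else 0) = (\<Sum>F\<in>X. if F = T then c F else 0)"
    proof (intro sum.cong refl)
      fix F assume F: "F \<in> X"
      have fF: "finite F" using XU[OF F] fO by (blast intro: finite_subset)
      have "T \<subseteq> F \<longleftrightarrow> F = T"
        using card_subset_eq[OF fF, of T] XU[OF F] TO by auto
      then show "(if T \<subseteq> F then c F else 0) = (if F = T then c F else 0)" by simp
    qed
    also have "\<dots> = c T" using fX T(1) by simp
    finally show ?thesis .
  qed
  have "shatters X T"
    unfolding shatters_def
  proof (intro allI impI)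
    fix A assume A: "A \<subseteq> T"
    have "\<bar>\<Sum>F\<in>X. if F \<inter> T = A then c F else 0\<bar> = \<bar>c T\<bar>"
      using incl_excl[OF zero fT A order_refl] zT by simp
    then have "(\<Sum>F\<in>X. if F \<inter> T = A then c F else 0) \<noteq> 0" using T(2) by auto
    have "\<exists>F\<in>X. (if F \<inter> T = A then c F else 0) \<noteq> 0"
    proof (rule ccontr)
      assume "\<not> ?thesis"
      then have "(\<Sum>F\<in>X. if F \<inter> T = A then c F else 0) = 0" by (simp add: sum.neutral)
      then show False using \<open>(\<Sum>F\<in>X. if F \<inter> T = A then c F else 0) \<noteq> 0\<close> by simp
    qed
    then obtain F where "F \<in> X" "(if F \<inter> T = A then c F else 0) \<noteq> 0" by blast
    then show "\<exists>F\<in>X. F \<inter> T = A" by (auto split: if_splits)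
  qed
  then show False using ns[OF fT TO(2)] by simp
qed

theorem claim3p3:
  fixes d n m :: nat and F B :: "nat \<Rightarrow> nat set"
  assumes "d \<ge> 2" and "n \<ge> d + 2"
    and "inj_on F {1..m}"
    and "\<And>i. i \<in> {1..m} \<Longrightarrow> F i \<subseteq> {1..n} \<and> card (F i) = d + 1"
    and "vc_dim_le (F ` {1..m}) d"
    and "\<And>i. i \<in> {1..m} \<Longrightarrow> admissible (F ` {1..m}) (F i) (B i)"
    and "\<And>i B'. i \<in> {1..m} \<Longrightarrow> admissible (F ` {1..m}) (F i) B' \<Longrightarrow> card B' \<le> card (B i)"
    and "v \<in> {1..n}"
  defines "X \<equiv> {F k - {v} | k. k \<in> {1..m} \<and> v \<in> B k}"
  shows "X \<subseteq> {S. S \<subseteq> {1..n} - {v} \<and> card S = d}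
         \<and> vc_dim_le X (d - 1)
         \<and> card X \<le> (n - 1) choose (d - 1)"
proof -
  note FU = assms(4) and adm = assms(6)
  have Bsub: "B k \<subseteq> F k" if "k \<in> {1..m}" for k
    using adm[OF that] unfolding admissible_def by auto
  have finF: "finite (F k)" if "k \<in> {1..m}" for k
  proof (rule finite_subset)
    show "F k \<subseteq> {1..n}" using FU[OF that] by simp
  qed simp
  have part1: "X \<subseteq> {S. S \<subseteq> {1..n} - {v} \<and> card S = d}"
  proof
    fix S assume "S \<in> X"
    then obtain k where k: "k \<in> {1..m}" "v \<in> B k" "S = F k - {v}" unfolding X_def by blast
    have "v \<in> F k" using Bsub[OF k(1)] k(2) by auto
    then show "S \<in> {S. S \<subseteq> {1..n} - {v} \<and> card S = d}"
      using k FU[OF k(1)] finF[OF k(1)] by auto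
  qed
  have part2: "vc_dim_le X (d - 1)"
    unfolding vc_dim_le_def
  proof (intro allI impI notI)
    fix S assume S: "finite S \<and> card S = d - 1 + 1" and sh: "shatters X S"
    have cS: "card S = d" using S assms(1) by auto
    obtain S' where S': "S' \<in> X" "S' \<inter> S = S" using sh unfolding shatters_def by blast
    then obtain k where k: "k \<in> {1..m}" "v \<in> B k" "S' = F k - {v}" unfolding X_def by blast
    have vF: "v \<in> F k" using Bsub[OF k(1)] k(2) by auto
    have cS': "card S' = d" using k vF FU[OF k(1)] finF[OF k(1)] by auto
    have fS': "finite S'" using k(3) finF[OF k(1)] by simp
    have "S \<subseteq> S'" using S'(2) by blast
    then have "S = S'" using card_subset_eq[OF fS'] cS cS' by auto
    then have Sk: "S = F k - {v}" using k by simp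
    have "B k - {v} \<subseteq> S" using Sk Bsub[OF k(1)] by auto
    then obtain S2 where S2: "S2 \<in> X" "S2 \<inter> S = B k - {v}"
      using sh unfolding shatters_def by blast
    then obtain j where j: "j \<in> {1..m}" "v \<in> B j" "S2 = F j - {v}" unfolding X_def by blast
    have vFj: "v \<in> F j" using Bsub[OF j(1)] j(2) by auto
    have "F j \<inter> F k = B k"
    proof -
      have Fk: "F k = insert v S" using Sk vF by auto
      have "F j \<inter> F k = insert v (S2 \<inter> S)" using Fk vFj j(3) Sk by auto
      then show ?thesis using S2(2) k(2) by auto
    qed
    moreover have "F j \<in> F ` {1..m}" using j(1) by auto
    ultimately show False using adm[OF k(1)] unfolding admissible_def by blast
  qed
  have part3: "card X \<le> (n - 1) choose (d - 1)"
  proof -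
    have cO: "card ({1..n} - {v}) = n - 1" using assms(8) by auto
    have "card X \<le> card ({1..n} - {v}) choose (d - 1)"
    proof (rule frankl_pach)
      show "finite ({1..n} - {v})" by simp
      show "\<And>F. F \<in> X \<Longrightarrow> F \<subseteq> {1..n} - {v} \<and> card F = d" using part1 by auto
      show "d \<ge> 2" by (rule assms(1))
      show "\<And>T. finite T \<Longrightarrow> card T = d \<Longrightarrow> \<not> shatters X T"
        using part2 assms(1) unfolding vc_dim_le_def by auto
    qed
    then show ?thesis using cO by simp
  qed
  show ?thesis using part1 part2 part3 by blast
qed

end
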